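(* Let $d\in\mathbb N$, $\mathcal D=\{1,\dots,d\}$, $\mathbf u\subseteq\mathcal D$, let $w:\mathbb Z^d\to[1,\infty)$ be a weight function and $f\in \mathrm H^w(\mathbb T^d)$. Then for any weight function $w_{\mathbf u}:\mathbb Z^{|\mathbf u|}\to[1,\infty)$ with $$w_{\mathbf u}(\mathbf k_{\mathbf u})\le w(\mathbf k)\quad\text{for all }\mathbf k\in\mathbb Z^d\text{ with }\mathbf k_{\mathbf u^c}=\mathbf 0,$$ we have $\mathrm P_{\mathbf u}f\in \mathrm H^{w_{\mathbf u}}(\mathbb T^{|\mathbf u|})$ and $f_{\mathbf u}\in \mathrm H^{w_{\mathbf u}}(\mathbb T^{|\mathbf u|})$.
   Context: $\mathbb T=[0,1)$ with periodic identification; $c_{\mathbf k}(g)=\int_{\mathbb T^m} g(\mathbf x)e^{-2\pi i\mathbf k\cdot\mathbf x}\,d\mathbf x$. For a weight $v:\mathbb Z^m\to[1,\infty)$ the Sobolev type space is $\mathrm H^{v}(\mathbb T^m)=\{g\in \mathrm L_2(\mathbb T^m): \|g\|_{\mathrm H^v}=(\sum_{\mathbf k\in\mathbb Z^m}v(\mathbf k)^2|c_{\mathbf k}(g)|^2)^{1/2}<\infty\}$. For $\mathbf u\subseteq\mathcal D$, $\mathbf u^c=\mathcal D\setminus\mathbf u$, $\mathbf x_{\mathbf u}=(x_i)_{i\in\mathbf u}$, and $\mathbf k_{\mathbf u}$ analogously. The projection is $\mathrm P_{\mathbf u}f(\mathbf x_{\mathbf u})=\int_{\mathbb T^{|\mathbf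 u^c|}}f(\mathbf x)\,d\mathbf x_{\mathbf u^c}$; the ANOVA terms are defined recursively by $f_{\mathbf u}=\mathrm P_{\mathbf u}f-\sum_{\mathbf v\subsetneq\mathbf u}f_{\mathbf v}$; both are regarded as functions on $\mathbb T^{|\mathbf u|}$. Convention $\mathbb Z^{0}=\{0\}$. *)

theory Defs
  imports "HOL-Probability.Probability"
begin

text \<open>The torus T^I for a finite index set I of coordinates: points are extensional
  functions nat => real (undefined outside I) with components in [0,1), equipped with
  the product of Lebesgue measure on [0,1).\<close>
definition torus :: "nat set \<Rightarrow> (nat \<Rightarrow> real) measure" where
  "torus I = PiM I (\<lambda>_. restrict_space lborel {0..<1::real})"

definition lattice :: "nat set \<Rightarrow> (nat \<Rightarrow> int) set" where
  "lattice I = {k. \<forall>i. i \<notin> I \<longrightarrow> k i = 0}"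

definition fourier_coeff :: "nat set \<Rightarrow> ((nat \<Rightarrow> real) \<Rightarrow> complex) \<Rightarrow> (nat \<Rightarrow> int) \<Rightarrow> complex" where
  "fourier_coeff I g k =
     integral\<^sup>L (torus I) (\<lambda>x. g x * cis (- 2 * pi * (\<Sum>i\<in>I. real_of_int (k i) * x i)))"

definition L2 :: "nat set \<Rightarrow> ((nat \<Rightarrow> real) \<Rightarrow> complex) \<Rightarrow> bool" where
  "L2 I g \<longleftrightarrow> g \<in> borel_measurable (torus I) \<and> integrable (torus I) (\<lambda>x. (cmod (g x))\<^sup>2)"

definition weight :: "nat set \<Rightarrow> ((nat \<Rightarrow> int) \<Rightarrow> real) \<Rightarrow> bool" where
  "weight I v \<longleftrightarrow> (\<forall>k\<in>lattice I. 1 \<le> v k)"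

definition sobolev :: "nat set \<Rightarrow> ((nat \<Rightarrow> int) \<Rightarrow> real) \<Rightarrow> ((nat \<Rightarrow> real) \<Rightarrow> complex) \<Rightarrow> bool" where
  "sobolev I v g \<longleftrightarrow> L2 I g \<and>
     (\<lambda>k. (v k)\<^sup>2 * (cmod (fourier_coeff I g k))\<^sup>2) summable_on lattice I"

definition proj :: "nat set \<Rightarrow> ((nat \<Rightarrow> real) \<Rightarrow> complex) \<Rightarrow> nat set \<Rightarrow> (nat \<Rightarrow> real) \<Rightarrow> complex" where
  "proj D f u y = integral\<^sup>L (torus (D - u)) (\<lambda>z. f (merge u (D - u) (y, z)))"

function anova :: "nat set \<Rightarrow> ((nat \<Rightarrow> real) \<Rightarrow> complex) \<Rightarrow> nat set \<Rightarrow> (nat \<Rightarrow> real) \<Rightarrow> complex" where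
  "anova D f u = (if finite u then
      (\<lambda>x. proj D f u x - (\<Sum>v\<in>{v. v \<subset> u}. anova D f v (restrict x v)))
    else undefined)"
  by auto
termination
  by (relation "Wellfounded.measure (\<lambda>(D, f, u). card u)") (auto intro: psubset_card_mono)

end

theory Submission imports Defs begin
abbreviation U01 :: "real measure" where "U01 \<equiv> restrict_space lborel {0..<1::real}"

lemma prob_U01: "prob_space U01"
  apply (rule prob_spaceI)
  apply (simp add: space_restrict_space emeasure_restrict_space)
  done

interpretation T: product_prob_space "\<lambda>_::nat. U01" "UNIV::nat set"
  by (simp add: product_prob_space_def product_prob_space_axioms_def product_sigma_finite_def prob_U01 prob_space_imp_sigma_finite)

lemma cis_exp_scaleR: "cis (-2*pi*(real_of_int n * t)) = exp (t *\<^sub>R (complex_of_real (-2*pi*real_of_int n) * \<i>))"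
  by (simp add: cis_conv_exp scaleR_conv_of_real algebra_simps)

lemma int_U01_cis: "integral\<^sup>L U01 (\<lambda>t. cis (-2*pi*(real_of_int n * t))) = (if n = 0 then 1 else 0)"
proof (cases "n = 0")
  case True
  interpret prob_space U01 by (rule prob_U01)
  have "space U01 = {0..<1}" by (simp add: space_restrict_space)
  then show ?thesis using True T.M.prob_space by simp
next
  case False
  define c where "c = complex_of_real (-2*pi*real_of_int n) * \<i>"
  have c0: "c \<noteq> 0" using False by (simp add: c_def)
  have "integral\<^sup>L U01 (\<lambda>t. cis (-2*pi*(real_of_int n * t))) =
      set_lebesgue_integral lborel {0..<1} (\<lambda>x. cis (-2*pi*(real_of_int n * x)))"
    by (simp add: integral_restrict_space set_lebesgue_integral_def)
  also have "\<dots> = interval_lebesgue_integral lborel 0 1 (\<lambda>x. cis (-2*pi*(real_of_int n * x)))"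
    by (auto intro!: set_integral_discrete_difference[where X="{0, 1}"]
           simp add: interval_lebesgue_integral_def einterval_iff zero_ereal_def one_ereal_def)
  also have "\<dots> = interval_lebesgue_integral lborel (ereal 0) (ereal 1) (\<lambda>x. exp (x *\<^sub>R c))"
    unfolding cis_exp_scaleR c_def[symmetric] by (simp add: zero_ereal_def one_ereal_def)
  also have "\<dots> = exp (1 *\<^sub>R c) / c - exp (0 *\<^sub>R c) / c"
    apply (rule interval_integral_FTC_finite[where F="\<lambda>t. exp (t *\<^sub>R c) / c"])
     apply (intro continuous_intros)
    apply (rule derivative_eq_intros exp_scaleR_has_vector_derivative_right)+
    using c0 by simp
  also have "\<dots> = 0"
  proof -
    have "exp c = cis (-2*pi*(real_of_int n * 1))" using cis_exp_scaleR[of n 1] by (simp add: c_def)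
    also have "\<dots> = cis (2 * pi * real_of_int (-n))" by simp
    also have "\<dots> = 1" by (rule cis_multiple_2pi) simp
    finally show ?thesis by simp
  qed
  finally show ?thesis using False by simp
qed

lemma cis_sum: "finite A \<Longrightarrow> cis (\<Sum>i\<in>A. f i) = (\<Prod>i\<in>A. cis (f i))"
  by (induction A rule: finite_induct) (auto simp: cis_mult[symmetric])

lemma meas_cis_U01[measurable]: "(\<lambda>t. cis (-2*pi*(real_of_int n * t))) \<in> borel_measurable U01"
proof -
  have "(\<lambda>t. cis (-2*pi*(real_of_int n * t))) \<in> borel_measurable borel"
    by (rule borel_measurable_continuous_onI) (intro continuous_intros)
  then show ?thesis by (intro measurable_restrict_space1) simp
qed

lemma int_torus_E:
  assumes "finite J"
  shows "integral\<^sup>L (torus J) (\<lambda>x. cis (-2*pi*(\<Sum>i\<in>J. real_of_int (k i) * x i))) = (if \<forall>i\<in>J. k i = 0 then 1 else 0)"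
proof -
  have "integral\<^sup>L (torus J) (\<lambda>x. cis (-2*pi*(\<Sum>i\<in>J. real_of_int (k i) * x i))) =
     integral\<^sup>L (torus J) (\<lambda>x. \<Prod>i\<in>J. (\<lambda>i t. cis (-2*pi*(real_of_int (k i) * t))) i (x i))"
    using assms by (simp add: sum_distrib_left cis_sum)
  also have "\<dots> = (\<Prod>i\<in>J. integral\<^sup>L U01 (\<lambda>t. cis (-2*pi*(real_of_int (k i) * t))))"
    unfolding torus_def
    apply (rule T.product_integral_prod[OF assms])
    apply (rule T.M.integrable_const_bound[where B=1])
     apply simp
    by (rule meas_cis_U01)
  also have "\<dots> = (\<Prod>i\<in>J. if k i = 0 then 1 else 0)" by (rule prod.cong[OF refl]) (rule int_U01_cis)
  also have "\<dots> = (if \<forall>i\<in>J. k i = 0 then 1 else 0)"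
    using assms by (induction J rule: finite_induct) auto
  finally show ?thesis .
qed

lemma torus_prob: "prob_space (torus I)"
  unfolding torus_def by (rule prob_space_PiM) (rule prob_U01)

lemma meas_id_U01[measurable]: "(\<lambda>t::real. t) \<in> borel_measurable U01"
  by (intro measurable_restrict_space1) simp

lemma meas_E:
  assumes "I \<subseteq> J"
  shows "(\<lambda>x. cis (-2*pi*(\<Sum>i\<in>I. real_of_int (k i) * x i))) \<in> borel_measurable (torus J)"
proof -
  have c: "\<And>i. i \<in> I \<Longrightarrow> (\<lambda>x. x i) \<in> borel_measurable (torus J)"
  proof -
    fix i assume "i \<in> I"
    then have "(\<lambda>x. x i) \<in> measurable (torus J) U01"
      unfolding torus_def using assms by (intro measurable_component_singleton) auto
    from measurable_compose[OF this meas_id_U01] show "(\<lambda>x. x i) \<in> borel_measurable (torus J)" .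
  qed
  have s: "(\<lambda>x. -2*pi*(\<Sum>i\<in>I. real_of_int (k i) * x i)) \<in> borel_measurable (torus J)"
    using c by (intro borel_measurable_times borel_measurable_const borel_measurable_sum) auto
  have "(\<lambda>t. cis t) \<in> borel_measurable borel"
    by (rule borel_measurable_continuous_onI) (intro continuous_intros)
  from measurable_compose[OF s this] show ?thesis .
qed

lemma L2_int:
  assumes "L2 I g" shows "integrable (torus I) g"
proof -
  interpret prob_space "torus I" by (rule torus_prob)
  have m: "g \<in> borel_measurable (torus I)" using assms by (simp add: L2_def)
  have n2: "integrable (torus I) (\<lambda>x. norm (g x ^ 2))"
    using assms by (simp add: L2_def norm_power)
  have m2: "(\<lambda>x. g x ^ 2) \<in> borel_measurable (torus I)" using m by (rule borel_measurable_power)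
  from iffD1[OF integrable_norm_iff[OF m2] n2]
  show ?thesis by (rule square_integrable_imp_integrable[OF m])
qed

lemma L2_intE:
  assumes "L2 I g" shows "integrable (torus I) (\<lambda>x. g x * cis (-2*pi*(\<Sum>i\<in>I. real_of_int (k i) * x i)))"
proof (rule Bochner_Integration.integrable_bound[OF integrable_norm[OF L2_int[OF assms]]])
  show "(\<lambda>x. g x * cis (-2*pi*(\<Sum>i\<in>I. real_of_int (k i) * x i))) \<in> borel_measurable (torus I)"
    using assms meas_E[OF subset_refl] unfolding L2_def by (intro borel_measurable_times) auto
  show "AE x in torus I. norm (g x * cis (-2*pi*(\<Sum>i\<in>I. real_of_int (k i) * x i))) \<le> norm (norm (g x))"
    by (simp add: norm_mult)
qed

lemma coeff_add:
  assumes "L2 I g" "L2 I h"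
  shows "fourier_coeff I (\<lambda>x. g x + h x) k = fourier_coeff I g k + fourier_coeff I h k"
  unfolding fourier_coeff_def distrib_right
  by (rule Bochner_Integration.integral_add[OF L2_intE[OF assms(1)] L2_intE[OF assms(2)]])

lemma coeff_cmult:
  shows "fourier_coeff I (\<lambda>x. a * g x) k = a * fourier_coeff I g k"
  unfolding fourier_coeff_def mult.assoc by (rule integral_mult_right_zero)

lemma sob_zero: "sobolev I W (\<lambda>_. 0)"
  by (simp add: sobolev_def L2_def fourier_coeff_def)

lemma sob_cmult:
  assumes "sobolev I W g" shows "sobolev I W (\<lambda>x. a * g x)"
proof -
  have L: "L2 I g" using assms by (simp add: sobolev_def)
  have "L2 I (\<lambda>x. a * g x)"
  proof -
    have m: "g \<in> borel_measurable (torus I)" "integrable (torus I) (\<lambda>x. (cmod (g x))\<^sup>2)"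
      using L unfolding L2_def by auto
    have "integrable (torus I) (\<lambda>x. (cmod a)\<^sup>2 * (cmod (g x))\<^sup>2)"
      by (rule integrable_mult_right[OF m(2)])
    moreover have "(\<lambda>x. a * g x) \<in> borel_measurable (torus I)"
      using m(1) by (intro borel_measurable_times borel_measurable_const)
    ultimately show ?thesis unfolding L2_def by (simp add: norm_mult power_mult_distrib)
  qed
  moreover have "(\<lambda>k. (W k)\<^sup>2 * (cmod (fourier_coeff I (\<lambda>x. a * g x) k))\<^sup>2) summable_on lattice I"
    unfolding coeff_cmult norm_mult power_mult_distrib
    using summable_on_cmult_right[OF assms[unfolded sobolev_def, THEN conjunct2], of "(cmod a)\<^sup>2"]
    by (simp add: ac_simps)
  ultimately show ?thesis by (simp add: sobolev_def)
qed

lemma sq_add_le: "(cmod (a + b))\<^sup>2 \<le> 2 * (cmod a)\<^sup>2 + 2 * (cmod b)\<^sup>2"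
proof -
  have "cmod (a + b) \<le> cmod a + cmod b" by (rule norm_triangle_ineq)
  then have "(cmod (a + b))\<^sup>2 \<le> (cmod a + cmod b)\<^sup>2" by (simp add: power_mono)
  also have "\<dots> \<le> 2 * (cmod a)\<^sup>2 + 2 * (cmod b)\<^sup>2"
  proof -
    have "0 \<le> (cmod a - cmod b)\<^sup>2" by simp
    moreover have "(cmod a + cmod b)\<^sup>2 = (cmod a)\<^sup>2 + (cmod b)\<^sup>2 + 2 * cmod a * cmod b"
      by (rule power2_sum)
    moreover have "(cmod a - cmod b)\<^sup>2 = (cmod a)\<^sup>2 + (cmod b)\<^sup>2 - 2 * cmod a * cmod b"
      by (rule power2_diff)
    ultimately show ?thesis by linarith
  qed
  finally show ?thesis .
qed

lemma sob_add:
  assumes "sobolev I W g" "sobolev I W h" shows "sobolev I W (\<lambda>x. g x + h x)"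
proof -
  have L: "L2 I g" "L2 I h" using assms by (simp_all add: sobolev_def)
  have mg[measurable]: "g \<in> borel_measurable (torus I)" and mh[measurable]: "h \<in> borel_measurable (torus I)"
    using L by (simp_all add: L2_def)
  have "integrable (torus I) (\<lambda>x. (cmod (g x + h x))\<^sup>2)"
  proof (rule Bochner_Integration.integrable_bound)
    show "integrable (torus I) (\<lambda>x. 2 * (cmod (g x))\<^sup>2 + 2 * (cmod (h x))\<^sup>2)"
      using L unfolding L2_def
      by (intro Bochner_Integration.integrable_add integrable_mult_right) auto
    show "(\<lambda>x. (cmod (g x + h x))\<^sup>2) \<in> borel_measurable (torus I)"
      apply (rule borel_measurable_power)
      apply (rule measurable_compose[OF borel_measurable_add[OF mg mh]])
      apply (rule borel_measurable_continuous_onI)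
      apply (intro continuous_intros)
      done
    show "AE x in torus I. norm ((cmod (g x + h x))\<^sup>2) \<le> norm (2 * (cmod (g x))\<^sup>2 + 2 * (cmod (h x))\<^sup>2)"
      using sq_add_le by auto
  qed
  moreover have "(\<lambda>x. g x + h x) \<in> borel_measurable (torus I)"
    using mg mh by (rule borel_measurable_add)
  ultimately have "L2 I (\<lambda>x. g x + h x)" unfolding L2_def by blast
  moreover have "(\<lambda>k. (W k)\<^sup>2 * (cmod (fourier_coeff I (\<lambda>x. g x + h x) k))\<^sup>2) summable_on lattice I"
  proof (rule summable_on_comparison_test)
    show "(\<lambda>k. 2 * ((W k)\<^sup>2 * (cmod (fourier_coeff I g k))\<^sup>2) + 2 * ((W k)\<^sup>2 * (cmod (fourier_coeff I h k))\<^sup>2)) summable_on lattice I"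
      using assms unfolding sobolev_def
      by (intro summable_on_add summable_on_cmult_right) auto
    fix k
    show "0 \<le> (W k)\<^sup>2 * (cmod (fourier_coeff I (\<lambda>x. g x + h x) k))\<^sup>2" by simp
    have "(W k)\<^sup>2 * (cmod (fourier_coeff I g k + fourier_coeff I h k))\<^sup>2 \<le>
          (W k)\<^sup>2 * (2 * (cmod (fourier_coeff I g k))\<^sup>2 + 2 * (cmod (fourier_coeff I h k))\<^sup>2)"
      by (intro mult_left_mono sq_add_le) simp
    then show "(W k)\<^sup>2 * (cmod (fourier_coeff I (\<lambda>x. g x + h x) k))\<^sup>2 \<le>
         2 * ((W k)\<^sup>2 * (cmod (fourier_coeff I g k))\<^sup>2) + 2 * ((W k)\<^sup>2 * (cmod (fourier_coeff I h k))\<^sup>2)"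
      unfolding coeff_add[OF L] by (simp add: algebra_simps)
  qed
  ultimately show ?thesis by (simp add: sobolev_def)
qed

lemma sob_sum:
  assumes "finite S" "\<And>s. s \<in> S \<Longrightarrow> sobolev I W (G s)"
  shows "sobolev I W (\<lambda>x. \<Sum>s\<in>S. G s x)"
  using assms by (induction S rule: finite_induct) (auto intro: sob_zero sob_add)

lemma sob_diff:
  assumes "sobolev I W g" "sobolev I W h" shows "sobolev I W (\<lambda>x. g x - h x)"
  using sob_add[OF assms(1) sob_cmult[OF assms(2), of "-1"]] by simp


lemma meas_cmod: "g \<in> borel_measurable M \<Longrightarrow> (\<lambda>x. cmod (g x)) \<in> borel_measurable M"
  by measurable

lemma proj_meas:
  assumes D: "finite D" "u \<subseteq> D" and f: "f \<in> borel_measurable (torus D)"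
  shows "(\<lambda>p. f (merge u (D - u) p)) \<in> borel_measurable (torus u \<Otimes>\<^sub>M torus (D - u))"
    and "proj D f u \<in> borel_measurable (torus u)"
proof -
  have eqD: "u \<union> (D - u) = D" using D by auto
  have "merge u (D - u) \<in> measurable (torus u \<Otimes>\<^sub>M torus (D - u)) (torus D)"
    unfolding torus_def using measurable_merge[of u "D - u" "\<lambda>_. U01"] eqD by simp
  from measurable_compose[OF this f]
  show m: "(\<lambda>p. f (merge u (D - u) p)) \<in> borel_measurable (torus u \<Otimes>\<^sub>M torus (D - u))" .
  interpret Z: prob_space "torus (D - u)" by (rule torus_prob)
  have m': "(\<lambda>(x, y). f (merge u (D - u) (x, y))) \<in> borel_measurable (torus u \<Otimes>\<^sub>M torus (D - u))"
    using m by (simp add: case_prod_beta')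
  show "proj D f u \<in> borel_measurable (torus u)"
    unfolding proj_def[abs_def]
    by (rule Z.borel_measurable_lebesgue_integral[OF m'])
qed

lemma sq_int_bound:
  assumes P: "prob_space M" and g: "g \<in> borel_measurable M"
  shows "ennreal ((cmod (integral\<^sup>L M g))\<^sup>2) \<le> (\<integral>\<^sup>+ z. ennreal ((cmod (g z))\<^sup>2) \<partial>M)"
proof -
  interpret prob_space M by (rule P)
  have a: "ennreal (cmod (integral\<^sup>L M g)) \<le> (\<integral>\<^sup>+ z. ennreal (cmod (g z)) \<partial>M)"
  proof (cases "integrable M g")
    case True then show ?thesis by (rule integral_norm_bound_ennreal)
  next
    case False then show ?thesis by (simp add: not_integrable_integral_eq)
  qed
  have "ennreal ((cmod (integral\<^sup>L M g))\<^sup>2) = (ennreal (cmod (integral\<^sup>L M g)))\<^sup>2"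
    by (simp add: ennreal_power)
  also have "\<dots> \<le> (\<integral>\<^sup>+ z. ennreal (cmod (g z)) \<partial>M)\<^sup>2"
    using a by (rule power_mono) simp
  also have "\<dots> = (\<integral>\<^sup>+ z. ennreal (cmod (g z)) * 1 \<partial>M)\<^sup>2" by simp
  also have "\<dots> \<le> (\<integral>\<^sup>+ z. (ennreal (cmod (g z)))\<^sup>2 \<partial>M) * (\<integral>\<^sup>+ z. 1 ^ 2 \<partial>M)"
    using g by (intro Cauchy_Schwarz_nn_integral) auto
  also have "\<dots> = (\<integral>\<^sup>+ z. ennreal ((cmod (g z))\<^sup>2) \<partial>M)"
    by (simp add: ennreal_power emeasure_space_1)
  finally show ?thesis .
qed

lemma proj_L2:
  assumes D: "finite D" "u \<subseteq> D" and L: "L2 D f"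
  shows "L2 u (proj D f u)"
proof -
  have f: "f \<in> borel_measurable (torus D)" and fi: "integrable (torus D) (\<lambda>x. (cmod (f x))\<^sup>2)"
    using L by (auto simp: L2_def)
  note pm = proj_meas[OF D f]
  have eqD: "u \<union> (D - u) = D" using D by auto
  have fin: "finite u" "finite (D - u)" using D finite_subset by auto
  have pm2: "(\<lambda>y. (cmod (proj D f u y))\<^sup>2) \<in> borel_measurable (torus u)"
    using pm(2) by (intro borel_measurable_power meas_cmod)
  have "(\<integral>\<^sup>+ y. ennreal (norm ((cmod (proj D f u y))\<^sup>2)) \<partial>torus u) \<le>
        (\<integral>\<^sup>+ y. (\<integral>\<^sup>+ z. ennreal ((cmod (f (merge u (D - u) (y, z))))\<^sup>2) \<partial>torus (D - u)) \<partial>torus u)"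
  proof (rule nn_integral_mono)
    fix y assume y: "y \<in> space (torus u)"
    have gm: "(\<lambda>z. f (merge u (D - u) (y, z))) \<in> borel_measurable (torus (D - u))"
      using measurable_Pair2[OF pm(1) y] .
    show "ennreal (norm ((cmod (proj D f u y))\<^sup>2)) \<le> (\<integral>\<^sup>+ z. ennreal ((cmod (f (merge u (D - u) (y, z))))\<^sup>2) \<partial>torus (D - u))"
      unfolding proj_def using sq_int_bound[OF torus_prob gm] by simp
  qed
  also have "\<dots> = (\<integral>\<^sup>+ x. ennreal ((cmod (f x))\<^sup>2) \<partial>torus D)"
  proof -
    have m: "(\<lambda>x. ennreal ((cmod (f x))\<^sup>2)) \<in> borel_measurable (PiM (u \<union> (D - u)) (\<lambda>_. U01))"
      using f unfolding eqD torus_def by (intro measurable_compose[OF _ measurable_ennreal] borel_measurable_power meas_cmod)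
    show ?thesis
      using T.product_nn_integral_fold[OF _ fin m] eqD unfolding torus_def by simp
  qed
  also have "\<dots> < \<infinity>"
    using fi by (simp add: integrable_iff_bounded)
  finally have "integrable (torus u) (\<lambda>y. (cmod (proj D f u y))\<^sup>2)"
    using pm2 by (simp add: integrable_iff_bounded)
  then show ?thesis using pm(2) by (simp add: L2_def)
qed

lemma proj_coeff:
  assumes D: "finite D" "u \<subseteq> D" and L: "L2 D f" and k: "k \<in> lattice u"
  shows "fourier_coeff u (proj D f u) k = fourier_coeff D f k"
proof -
  have eqD: "u \<union> (D - u) = D" using D by auto
  have fin: "finite u" "finite (D - u)" using D finite_subset by auto
  have sumeq: "(\<Sum>i\<in>D. real_of_int (k i) * merge u (D - u) (y, z) i) = (\<Sum>i\<in>u. real_of_int (k i) * y i)" for y z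
  proof -
    have "(\<Sum>i\<in>D. real_of_int (k i) * merge u (D - u) (y, z) i) = (\<Sum>i\<in>u. real_of_int (k i) * merge u (D - u) (y, z) i)"
      using k D by (intro sum.mono_neutral_right) (auto simp: lattice_def)
    also have "\<dots> = (\<Sum>i\<in>u. real_of_int (k i) * y i)"
      by (intro sum.cong) (auto simp: merge_def)
    finally show ?thesis .
  qed
  have "fourier_coeff D f k = integral\<^sup>L (PiM (u \<union> (D - u)) (\<lambda>_. U01))
      (\<lambda>x. f x * cis (-2*pi*(\<Sum>i\<in>D. real_of_int (k i) * x i)))"
    unfolding fourier_coeff_def torus_def eqD ..
  also have "\<dots> = (\<integral>y. (\<integral>z. f (merge u (D - u) (y, z)) * cis (-2*pi*(\<Sum>i\<in>D. real_of_int (k i) * merge u (D - u) (y, z) i)) \<partial>torus (D - u)) \<partial>torus u)"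
    unfolding torus_def
    by (rule T.product_integral_fold[OF _ fin]) (use L2_intE[OF L] eqD in \<open>auto simp: torus_def\<close>)
  also have "\<dots> = (\<integral>y. proj D f u y * cis (-2*pi*(\<Sum>i\<in>u. real_of_int (k i) * y i)) \<partial>torus u)"
    unfolding sumeq proj_def by simp
  finally show ?thesis unfolding fourier_coeff_def by simp
qed


lemma lift_L2:
  assumes u: "finite u" "v \<subseteq> u" and L: "L2 v g"
  shows "L2 u (\<lambda>x. g (restrict x v))"
proof -
  have g: "g \<in> borel_measurable (torus v)" and gi: "integrable (torus v) (\<lambda>y. (cmod (g y))\<^sup>2)"
    using L by (auto simp: L2_def)
  have r: "(\<lambda>x. restrict x v) \<in> measurable (torus u) (torus v)"
    unfolding torus_def by (rule measurable_restrict_subset[OF u(2)])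
  have g2: "(\<lambda>y. (cmod (g y))\<^sup>2) \<in> borel_measurable (torus v)"
    using g by (intro borel_measurable_power meas_cmod)
  have dr: "torus v = distr (torus u) (torus v) (\<lambda>x. restrict x v)"
    unfolding torus_def by (rule T.distr_restrict[OF u(2,1)])
  have "integrable (distr (torus u) (torus v) (\<lambda>x. restrict x v)) (\<lambda>y. (cmod (g y))\<^sup>2)"
    using gi dr by simp
  then have "integrable (torus u) (\<lambda>x. (cmod (g (restrict x v)))\<^sup>2)"
    using integrable_distr_eq[OF r g2] by simp
  moreover have "(\<lambda>x. g (restrict x v)) \<in> borel_measurable (torus u)"
    using measurable_compose[OF r g] .
  ultimately show ?thesis by (simp add: L2_def)
qed

lemma lift_coeff:
  assumes u: "finite u" "v \<subseteq> u" and L: "L2 v g" and k: "k \<in> lattice u"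
  shows "fourier_coeff u (\<lambda>x. g (restrict x v)) k = (if k \<in> lattice v then fourier_coeff v g k else 0)"
proof -
  have eqU: "v \<union> (u - v) = u" using u by auto
  have fin: "finite v" "finite (u - v)" using u finite_subset by auto
  define C where "C = integral\<^sup>L (torus (u - v)) (\<lambda>z. cis (-2*pi*(\<Sum>i\<in>u - v. real_of_int (k i) * z i)))"
  have C: "C = (if k \<in> lattice v then 1 else 0)"
    unfolding C_def int_torus_E[OF fin(2)] using k u by (auto simp: lattice_def)
  have sumeq: "cis (-2*pi*(\<Sum>i\<in>u. real_of_int (k i) * merge v (u - v) (y, z) i)) =
     cis (-2*pi*(\<Sum>i\<in>v. real_of_int (k i) * y i)) * cis (-2*pi*(\<Sum>i\<in>u - v. real_of_int (k i) * z i))" for y z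
  proof -
    have "(\<Sum>i\<in>u. real_of_int (k i) * merge v (u - v) (y, z) i) =
        (\<Sum>i\<in>u - v. real_of_int (k i) * merge v (u - v) (y, z) i) + (\<Sum>i\<in>v. real_of_int (k i) * merge v (u - v) (y, z) i)"
      by (rule sum.subset_diff[OF u(2) u(1)])
    also have "\<dots> = (\<Sum>i\<in>u - v. real_of_int (k i) * z i) + (\<Sum>i\<in>v. real_of_int (k i) * y i)"
      by (intro arg_cong2[where f="(+)"] sum.cong) (auto simp: merge_def)
    finally have e: "-2*pi*(\<Sum>i\<in>u. real_of_int (k i) * merge v (u - v) (y, z) i) =
       -2*pi*(\<Sum>i\<in>v. real_of_int (k i) * y i) + -2*pi*(\<Sum>i\<in>u - v. real_of_int (k i) * z i)"
      by (simp add: algebra_simps)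
    show ?thesis by (simp only: e cis_mult)
  qed
  have "fourier_coeff u (\<lambda>x. g (restrict x v)) k = integral\<^sup>L (PiM (v \<union> (u - v)) (\<lambda>_. U01))
      (\<lambda>x. g (restrict x v) * cis (-2*pi*(\<Sum>i\<in>u. real_of_int (k i) * x i)))"
    unfolding fourier_coeff_def torus_def eqU ..
  also have "\<dots> = (\<integral>y. (\<integral>z. g (restrict (merge v (u - v) (y, z)) v) * cis (-2*pi*(\<Sum>i\<in>u. real_of_int (k i) * merge v (u - v) (y, z) i)) \<partial>torus (u - v)) \<partial>torus v)"
    unfolding torus_def
    apply (rule T.product_integral_fold[OF _ fin])
    subgoal by blast
    subgoal unfolding eqU using L2_intE[OF lift_L2[OF u L], of k] by (simp add: torus_def)
    done
  also have "\<dots> = (\<integral>y. g y * cis (-2*pi*(\<Sum>i\<in>v. real_of_int (k i) * y i)) * C \<partial>torus v)"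
  proof (rule Bochner_Integration.integral_cong[OF refl])
    fix y assume y: "y \<in> space (torus v)"
    have ry: "restrict (merge v (u - v) (y, z)) v = y" for z
    proof -
      have "y \<in> extensional v" using y by (simp add: torus_def space_PiM PiE_iff)
      then show ?thesis by (simp add: extensional_def merge_def restrict_def fun_eq_iff)
    qed
    show "(\<integral>z. g (restrict (merge v (u - v) (y, z)) v) * cis (-2*pi*(\<Sum>i\<in>u. real_of_int (k i) * merge v (u - v) (y, z) i)) \<partial>torus (u - v))
       = g y * cis (-2*pi*(\<Sum>i\<in>v. real_of_int (k i) * y i)) * C"
      unfolding ry sumeq C_def mult.assoc[symmetric] by (rule integral_mult_right_zero)
  qed
  also have "\<dots> = fourier_coeff v g k * C"
    unfolding fourier_coeff_def by (rule integral_mult_left_zero)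
  finally show ?thesis using C by simp
qed

lemma lift_sob:
  assumes u: "finite u" "v \<subseteq> u" and S: "sobolev v W g"
  shows "sobolev u W (\<lambda>x. g (restrict x v))"
proof -
  have L: "L2 v g" using S by (simp add: sobolev_def)
  have sub: "lattice v \<subseteq> lattice u" using u by (auto simp: lattice_def)
  have "(\<lambda>k. (W k)\<^sup>2 * (cmod (fourier_coeff v g k))\<^sup>2) summable_on lattice v
     \<longleftrightarrow> (\<lambda>k. (W k)\<^sup>2 * (cmod (fourier_coeff u (\<lambda>x. g (restrict x v)) k))\<^sup>2) summable_on lattice u"
  proof (rule summable_on_cong_neutral)
    fix k assume "k \<in> lattice u - lattice v"
    then show "(W k)\<^sup>2 * (cmod (fourier_coeff u (\<lambda>x. g (restrict x v)) k))\<^sup>2 = 0"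
      using lift_coeff[OF u L, of k] by simp
  next
    fix k assume "k \<in> lattice v - lattice u"
    then show "(W k)\<^sup>2 * (cmod (fourier_coeff v g k))\<^sup>2 = 0" using sub by blast
  next
    fix k assume "k \<in> lattice v \<inter> lattice u"
    then show "(W k)\<^sup>2 * (cmod (fourier_coeff v g k))\<^sup>2 = (W k)\<^sup>2 * (cmod (fourier_coeff u (\<lambda>x. g (restrict x v)) k))\<^sup>2"
      using lift_coeff[OF u L, of k] by simp
  qed
  then show ?thesis using S lift_L2[OF u L] by (simp add: sobolev_def)
qed

definition cond :: "nat set \<Rightarrow> ((nat \<Rightarrow> int) \<Rightarrow> real) \<Rightarrow> nat set \<Rightarrow> ((nat \<Rightarrow> int) \<Rightarrow> real) \<Rightarrow> bool" where
  "cond D w u W \<longleftrightarrow> (\<forall>k\<in>lattice D. (\<forall>i\<in>D - u. k i = 0) \<longrightarrow> W (\<lambda>i. if i \<in> u then k i else 0) \<le> w k)"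

lemma proj_sob:
  assumes D: "finite D" "u \<subseteq> D" and S: "sobolev D w f" and W: "weight u W" and c: "cond D w u W"
  shows "sobolev u W (proj D f u)"
proof -
  have L: "L2 D f" using S by (simp add: sobolev_def)
  have sub: "lattice u \<subseteq> lattice D" using D by (auto simp: lattice_def)
  have "(\<lambda>k. (W k)\<^sup>2 * (cmod (fourier_coeff u (proj D f u) k))\<^sup>2) summable_on lattice u"
  proof (rule summable_on_comparison_test)
    show "(\<lambda>k. (w k)\<^sup>2 * (cmod (fourier_coeff D f k))\<^sup>2) summable_on lattice u"
      by (rule summable_on_subset_banach[OF _ sub]) (use S in \<open>simp add: sobolev_def\<close>)
    fix k assume k: "k \<in> lattice u"
    show "0 \<le> (W k)\<^sup>2 * (cmod (fourier_coeff u (proj D f u) k))\<^sup>2" by simp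
    have kD: "k \<in> lattice D" using k sub by auto
    have "(\<lambda>i. if i \<in> u then k i else 0) = k" using k by (auto simp: lattice_def fun_eq_iff)
    moreover have "\<forall>i\<in>D - u. k i = 0" using k by (simp add: lattice_def)
    moreover have "(\<forall>i\<in>D - u. k i = 0) \<longrightarrow> W (\<lambda>i. if i \<in> u then k i else 0) \<le> w k"
      using c kD unfolding cond_def by blast
    ultimately have "W k \<le> w k" by simp
    moreover have "1 \<le> W k" using W k by (simp add: weight_def)
    ultimately have "(W k)\<^sup>2 \<le> (w k)\<^sup>2" by (intro power_mono) auto
    then show "(W k)\<^sup>2 * (cmod (fourier_coeff u (proj D f u) k))\<^sup>2 \<le> (w k)\<^sup>2 * (cmod (fourier_coeff D f k))\<^sup>2"
      unfolding proj_coeff[OF D L k] by (intro mult_right_mono) auto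
  qed
  then show ?thesis using proj_L2[OF D L] by (simp add: sobolev_def)
qed


lemma cond_sub:
  assumes c: "cond D w u W" and vu: "v \<subseteq> u" and uD: "u \<subseteq> D"
  shows "cond D w v W"
  unfolding cond_def
proof (intro ballI impI)
  fix k assume kD: "k \<in> lattice D" and z: "\<forall>i\<in>D - v. k i = 0"
  have z': "\<forall>i\<in>D - u. k i = 0" using z vu by blast
  have eq: "(\<lambda>i. if i \<in> u then k i else 0) = (\<lambda>i. if i \<in> v then k i else 0)"
  proof
    fix i show "(if i \<in> u then k i else 0) = (if i \<in> v then k i else 0)"
    proof (cases "i \<in> v")
      case True
      then have "i \<in> u" using vu by blast
      then show ?thesis using True by simp
    next
      case False
      show ?thesis
      proof (cases "i \<in> u")
        case True
        then have "i \<in> D - v" using uD False by blast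
        then have "k i = 0" using z by blast
        then show ?thesis using True False by simp
      next
        case False2: False
        then show ?thesis using False by simp
      qed
    qed
  qed
  have "W (\<lambda>i. if i \<in> u then k i else 0) \<le> w k"
    using c kD z' unfolding cond_def by blast
  then show "W (\<lambda>i. if i \<in> v then k i else 0) \<le> w k" by (simp only: eq)
qed

lemma anova_sob:
  assumes D: "finite D" and S: "sobolev D w f"
  shows "finite u \<Longrightarrow> u \<subseteq> D \<Longrightarrow> weight u W \<Longrightarrow> cond D w u W \<Longrightarrow> sobolev u W (anova D f u)"
proof (induction u arbitrary: W rule: finite_psubset_induct)
  case (psubset u)
  have eq: "anova D f u = (\<lambda>x. proj D f u x - (\<Sum>v\<in>{v. v \<subset> u}. anova D f v (restrict x v)))"
    using anova.simps[of D f u] psubset.hyps(1) by (simp only: if_True)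
  have fin: "finite {v. v \<subset> u}"
    by (rule finite_subset[of _ "Pow u"]) (use psubset.hyps in auto)
  show ?case
    unfolding eq
  proof (rule sob_diff[OF proj_sob[OF D psubset.prems(1) S psubset.prems(2,3)] sob_sum[OF fin]])
    fix v assume "v \<in> {v. v \<subset> u}"
    then have vu: "v \<subset> u" by simp
    have lsub: "lattice v \<subseteq> lattice u" using vu unfolding lattice_def by blast
    have wv: "weight v W"
      using psubset.prems(2) lsub unfolding weight_def by blast
    have vD: "v \<subseteq> D" using vu psubset.prems(1) by blast
    have cv: "cond D w v W" using cond_sub[OF psubset.prems(3) _ psubset.prems(1)] vu by blast
    have "sobolev v W (anova D f v)"
      by (rule psubset.IH[OF vu vD wv cv])
    then show "sobolev u W (\<lambda>x. anova D f v (restrict x v))"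
      by (rule lift_sob[OF psubset.hyps(1) psubset_imp_subset[OF vu]])
  qed
qed

theorem theorem3p10:
  fixes d :: nat and u :: "nat set"
    and w wu :: "(nat \<Rightarrow> int) \<Rightarrow> real"
    and f :: "(nat \<Rightarrow> real) \<Rightarrow> complex"
  assumes "u \<subseteq> {1..d}"
    and "weight {1..d} w"
    and "sobolev {1..d} w f"
    and "weight u wu"
    and "\<forall>k\<in>lattice {1..d}. (\<forall>i\<in>{1..d} - u. k i = 0) \<longrightarrow>
           wu (\<lambda>i. if i \<in> u then k i else 0) \<le> w k"
  shows "sobolev u wu (proj {1..d} f u) \<and> sobolev u wu (anova {1..d} f u)"
proof -
  have c: "cond {1..d} w u wu" using assms(5) by (simp add: cond_def)
  have fu: "finite u" using assms(1) finite_subset by blast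
  have fD: "finite {1..d}" by simp
  show ?thesis
    using proj_sob[OF fD assms(1) assms(3) assms(4) c] anova_sob[OF fD assms(3) fu assms(1) assms(4) c]
    by (rule conjI)
qed

end
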